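(* Let $\Omega$ be a finite set and let $P=(p_i)_{i\in\Omega}$ and $Q=(q_i)_{i\in\Omega}$ be probability distributions on $\Omega$, both with support $\Omega$. Let $(e_i)_{i\in\Omega}$ be independent $\mathrm{Exp}(1)$ random variables, and set $\tilde{x}=\arg\min_{i\in\Omega} e_i/q_i$ (the drafted token) and $x^{next}=\arg\min_{i\in\Omega} e_i/p_i$. Let $P_{accept}^{(1)}=\Pr[\tilde{x}=x^{next}]$ be the probability that the first drafted token is accepted in exponential race speculative decoding. Then $$1-D_{TV}[P,Q]\;\ge\; P_{accept}^{(1)}\;\ge\; D_{HM}[P,Q],$$ where $D_{TV}[P,Q]=\frac12\sum_{i\in\Omega}|p_i-q_i|$ and $D_{HM}[P,Q]=\sum_{i\in\Omega}\frac{p_iq_i}{p_i+q_i}$.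
   Context: In exponential race speculative decoding, given the context, the draft model's next-token distribution is $Q$ and the target model's next-token distribution is $P$; one drafts the winner of the exponential race under $Q$ and accepts it iff it is also the winner of the race under $P$ driven by the same exponential variables $(e_i)$. *)

theory Defs
  imports "HOL-Probability.Probability"
begin

definition exp_race_space :: "'a set \<Rightarrow> ('a \<Rightarrow> real) measure" where
  "exp_race_space \<Omega> = PiM \<Omega> (\<lambda>_. density lborel (exponential_density 1))"

definition P_accept1 :: "'a set \<Rightarrow> ('a \<Rightarrow> real) \<Rightarrow> ('a \<Rightarrow> real) \<Rightarrow> real" where
  "P_accept1 \<Omega> p q = measure (exp_race_space \<Omega>)
     {e \<in> space (exp_race_space \<Omega>).
        arg_min_on (\<lambda>i. e i / q i) \<Omega> = arg_min_on (\<lambda>i. e i / p i) \<Omega>}"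

definition D_TV :: "'a set \<Rightarrow> ('a \<Rightarrow> real) \<Rightarrow> ('a \<Rightarrow> real) \<Rightarrow> real" where
  "D_TV \<Omega> p q = (1/2) * (\<Sum>i\<in>\<Omega>. \<bar>p i - q i\<bar>)"

definition D_HM :: "'a set \<Rightarrow> ('a \<Rightarrow> real) \<Rightarrow> ('a \<Rightarrow> real) \<Rightarrow> real" where
  "D_HM \<Omega> p q = (\<Sum>i\<in>\<Omega>. p i * q i / (p i + q i))"

end

theory Submission
  imports Defs
begin


abbreviation "EXP \<equiv> density lborel (exponential_density (1::real))"

lemma EXP_prob: "prob_space EXP"
  by (rule prob_space_exponential_density) simp

lemma EXP_distr: "distributed EXP lborel (\<lambda>x. x) (exponential_density 1)"
  unfolding distributed_def
  by (auto simp: distr_id2 intro!: distr_cong[THEN trans] )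

lemma EXP_tail:
  assumes "0 \<le> a"
  shows "emeasure EXP {a<..} = ennreal (exp (- a))"
proof -
  interpret prob_space EXP by (rule EXP_prob)
  have "prob {x \<in> space EXP. a < x} = exp (- a * 1)"
    by (rule exponential_distributedD_gt[OF EXP_distr assms]) simp
  moreover have "{x \<in> space EXP. a < x} = {a<..}" by auto
  ultimately show ?thesis by (simp add: emeasure_eq_measure)
qed


lemma EXP_integral:
  assumes "C \<ge> 0"
  shows "(\<integral>\<^sup>+t. ennreal (exp (- C * t)) \<partial>EXP) = ennreal (1 / (1 + C))"
proof -
  have l: "0 < 1 + C" using assms by simp
  interpret pe: prob_space "density lborel (exponential_density (1 + C))"
    by (rule prob_space_exponential_density[OF l])
  have one: "(\<integral>\<^sup>+t. ennreal (exponential_density (1 + C) t) \<partial>lborel) = 1"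
    using pe.emeasure_space_1 by (simp add: emeasure_density)
  have "(\<integral>\<^sup>+t. ennreal (exp (- C * t)) \<partial>EXP)
      = (\<integral>\<^sup>+t. ennreal (exponential_density 1 t) * ennreal (exp (- C * t)) \<partial>lborel)"
    by (subst nn_integral_density) auto
  also have "\<dots> = (\<integral>\<^sup>+t. ennreal (1 / (1 + C)) * ennreal (exponential_density (1 + C) t) \<partial>lborel)"
  proof (rule nn_integral_cong)
    fix t :: real
    show "ennreal (exponential_density 1 t) * ennreal (exp (- C * t)) =
          ennreal (1 / (1 + C)) * ennreal (exponential_density (1 + C) t)"
    proof (cases "t < 0")
      case False
      have "exp (- t * 1) * exp (- C * t) = 1 / (1 + C) * ((1 + C) * exp (- t * (1 + C)))"
      proof -
        have e: "exp (- t * 1) * exp (- C * t) = exp (- t * (1 + C))"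
          by (simp add: exp_add[symmetric] algebra_simps)
        have "1 / (1 + C) * ((1 + C) * exp (- t * (1 + C))) = exp (- t * (1 + C))"
          using l by simp
        then show ?thesis using e by simp
      qed
      then show ?thesis using False l
        by (simp add: exponential_density_def ennreal_mult'[symmetric] del: ennreal_mult')
    qed (simp add: exponential_density_def)
  qed
  also have "\<dots> = ennreal (1 / (1 + C))"
    by (subst nn_integral_cmult) (auto simp: one)
  finally show ?thesis .
qed


lemma EXP_sf: "product_sigma_finite (\<lambda>_::'a. EXP)"
proof -
  interpret prob_space EXP by (rule EXP_prob)
  show ?thesis unfolding product_sigma_finite_def by (simp add: sigma_finite_measure_axioms)
qed

lemma core_emeasure:
  fixes \<Omega> :: "'a set" and c :: "'a \<Rightarrow> real"
  assumes fin: "finite \<Omega>" and i: "i \<in> \<Omega>" and c: "\<And>j. j \<in> \<Omega> \<Longrightarrow> c j > 0"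
  shows "emeasure (exp_race_space \<Omega>) {e \<in> space (exp_race_space \<Omega>). 0 \<le> e i \<and> (\<forall>j\<in>\<Omega>-{i}. c j * e i < e j)}
     = ennreal (1 / (1 + (\<Sum>j\<in>\<Omega>-{i}. c j)))"
proof -
  interpret product_sigma_finite "\<lambda>_::'a. EXP" by (rule EXP_sf)
  define \<Omega>' where "\<Omega>' = \<Omega> - {i}"
  have Om: "\<Omega> = insert i \<Omega>'" "i \<notin> \<Omega>'" "finite \<Omega>'" using i fin by (auto simp: \<Omega>'_def)
  define T where "T = {e \<in> space (exp_race_space \<Omega>). 0 \<le> e i \<and> (\<forall>j\<in>\<Omega>'. c j * e i < e j)}"
  have Tm: "T \<in> sets (PiM \<Omega> (\<lambda>_. EXP))"
  proof -
    have comp: "(\<lambda>x. x j) \<in> borel_measurable (PiM \<Omega> (\<lambda>_. EXP))" if "j \<in> \<Omega>" for j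
      using measurable_component_singleton[OF that, of "\<lambda>_. EXP"]
      by (simp add: measurable_cong_sets[OF refl sets_density])
    have [measurable]: "\<And>j. j \<in> \<Omega>' \<Longrightarrow> Measurable.pred (Pi\<^sub>M \<Omega> (\<lambda>_. EXP)) (\<lambda>x. c j * x i < x j)"
    proof -
      fix j assume "j \<in> \<Omega>'"
      then have [measurable]: "(\<lambda>x. x j) \<in> borel_measurable (PiM \<Omega> (\<lambda>_. EXP))"
        "(\<lambda>x. x i) \<in> borel_measurable (PiM \<Omega> (\<lambda>_. EXP))" using comp Om by auto
      show "Measurable.pred (Pi\<^sub>M \<Omega> (\<lambda>_. EXP)) (\<lambda>x. c j * x i < x j)" by measurable
    qed
    have [measurable]: "(\<lambda>x. x i) \<in> borel_measurable (PiM \<Omega> (\<lambda>_. EXP))" using comp Om by auto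
    show ?thesis unfolding T_def exp_race_space_def using Om by measurable
  qed
  have "emeasure (exp_race_space \<Omega>) T = (\<integral>\<^sup>+e. indicator T e \<partial>PiM (insert i \<Omega>') (\<lambda>_. EXP))"
    using Tm Om by (simp add: exp_race_space_def)
  also have "\<dots> = (\<integral>\<^sup>+t. (\<integral>\<^sup>+x. indicator T (x(i := t)) \<partial>PiM \<Omega>' (\<lambda>_. EXP)) \<partial>EXP)"
    by (rule product_nn_integral_insert_rev) (use Om Tm in auto)
  also have "\<dots> = (\<integral>\<^sup>+t. (\<integral>\<^sup>+x. indicator {0..} t * (\<Prod>j\<in>\<Omega>'. indicator {c j * t<..} (x j)) \<partial>PiM \<Omega>' (\<lambda>_. EXP)) \<partial>EXP)"
  proof (intro nn_integral_cong)
    fix t x assume x: "x \<in> space (PiM \<Omega>' (\<lambda>_. EXP))"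
    have xs: "x(i := t) \<in> space (exp_race_space \<Omega>)"
      using x Om by (auto simp: exp_race_space_def space_PiM PiE_def extensional_def)
    have "indicator T (x(i := t)) = indicator {0..} t * (if \<forall>j\<in>\<Omega>'. c j * t < x j then 1 else (0::ennreal))"
      using xs Om by (auto simp: T_def indicator_def)
    also have "(if \<forall>j\<in>\<Omega>'. c j * t < x j then 1 else (0::ennreal)) = (\<Prod>j\<in>\<Omega>'. indicator {c j * t<..} (x j))"
      using Om(3) by (induction rule: finite_induct) (auto simp: indicator_def)
    finally show "indicator T (x(i := t)) = indicator {0..} t * (\<Prod>j\<in>\<Omega>'. indicator {c j * t<..} (x j) :: ennreal)" .
  qed
  also have "\<dots> = (\<integral>\<^sup>+t. indicator {0..} t * (\<Prod>j\<in>\<Omega>'. emeasure EXP {c j * t<..}) \<partial>EXP)"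
    by (intro nn_integral_cong, subst nn_integral_cmult, measurable, subst product_nn_integral_prod) (auto simp: Om)
  also have "\<dots> = (\<integral>\<^sup>+t. ennreal (exp (- (\<Sum>j\<in>\<Omega>'. c j) * t)) \<partial>EXP)"
  proof (rule nn_integral_cong_AE)
    have "AE t in EXP. 0 \<le> t"
      by (subst AE_density) (auto simp: exponential_density_def)
    then show "AE t in EXP. indicator {0..} t * (\<Prod>j\<in>\<Omega>'. emeasure EXP {c j * t<..}) = ennreal (exp (- (\<Sum>j\<in>\<Omega>'. c j) * t))"
    proof (rule AE_mp, intro AE_I2 impI)
      fix t :: real assume t: "0 \<le> t"
      have "(\<Prod>j\<in>\<Omega>'. emeasure EXP {c j * t<..}) = (\<Prod>j\<in>\<Omega>'. ennreal (exp (- (c j * t))))"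
        using c t Om by (intro prod.cong refl EXP_tail) (auto intro!: mult_nonneg_nonneg simp: less_imp_le)
      also have "\<dots> = ennreal (\<Prod>j\<in>\<Omega>'. exp (- (c j * t)))"
        by (rule prod_ennreal) simp
      also have "(\<Prod>j\<in>\<Omega>'. exp (- (c j * t))) = exp (- (\<Sum>j\<in>\<Omega>'. c j) * t)"
        using Om(3) by (simp add: exp_sum[symmetric] sum_distrib_right sum_negf)
      finally show "indicator {0..} t * (\<Prod>j\<in>\<Omega>'. emeasure EXP {c j * t<..}) = ennreal (exp (- (\<Sum>j\<in>\<Omega>'. c j) * t))"
        using t by simp
    qed
  qed
  also have "\<dots> = ennreal (1 / (1 + (\<Sum>j\<in>\<Omega>'. c j)))"
    by (rule EXP_integral) (use c Om in \<open>auto intro!: sum_nonneg simp: less_imp_le\<close>)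
  finally show ?thesis by (simp add: T_def \<Omega>'_def)
qed


lemma race_prob: "prob_space (exp_race_space \<Omega>)"
  unfolding exp_race_space_def by (rule prob_space_PiM) (rule EXP_prob)

lemma race_comp:
  assumes "j \<in> \<Omega>"
  shows "(\<lambda>x. x j) \<in> borel_measurable (exp_race_space \<Omega>)"
  using measurable_component_singleton[OF assms, of "\<lambda>_. EXP"]
  by (simp add: exp_race_space_def measurable_cong_sets[OF refl sets_density])

definition Sset :: "'a set \<Rightarrow> ('a \<Rightarrow> real) \<Rightarrow> 'a \<Rightarrow> ('a \<Rightarrow> real) set" where
  "Sset \<Omega> w i = {e \<in> space (exp_race_space \<Omega>). 0 \<le> e i \<and> (\<forall>j\<in>\<Omega>-{i}. e i / w i < e j / w j)}"

lemma Sset_inter: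
  assumes "i \<in> \<Omega>" "\<And>j. j \<in> \<Omega> \<Longrightarrow> p j > 0" "\<And>j. j \<in> \<Omega> \<Longrightarrow> q j > 0"
  shows "Sset \<Omega> q i \<inter> Sset \<Omega> p i =
    {e \<in> space (exp_race_space \<Omega>). 0 \<le> e i \<and> (\<forall>j\<in>\<Omega>-{i}. max (q j / q i) (p j / p i) * e i < e j)}"
proof -
  have *: "e i / w i < e j / w j \<longleftrightarrow> (w j / w i) * e i < e j" if "w i > 0" "w j > 0" for e :: "'a \<Rightarrow> real" and w j
    using that by (simp add: field_simps)
  have **: "max a b * x < y \<longleftrightarrow> a * x < y \<and> b * x < y" if "a > 0" "b > 0" "x \<ge> 0" for a b x y :: real
  proof -
    have "a * x \<le> max a b * x" "b * x \<le> max a b * x" using that by (auto intro: mult_right_mono)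
    then show ?thesis by (cases "a \<le> b") (auto simp: max_def)
  qed
  show ?thesis using assms
    unfolding Sset_def by (auto simp: * ** )
qed

lemma Sset_single:
  assumes "i \<in> \<Omega>" "\<And>j. j \<in> \<Omega> \<Longrightarrow> q j > 0"
  shows "Sset \<Omega> q i = {e \<in> space (exp_race_space \<Omega>). 0 \<le> e i \<and> (\<forall>j\<in>\<Omega>-{i}. (q j / q i) * e i < e j)}"
proof -
  have *: "e i / w i < e j / w j \<longleftrightarrow> (w j / w i) * e i < e j" if "w i > 0" "w j > 0" for e :: "'a \<Rightarrow> real" and w j
    using that by (simp add: field_simps)
  show ?thesis using assms unfolding Sset_def by (auto simp: *)
qed

lemma core_measure:
  fixes \<Omega> :: "'a set" and c :: "'a \<Rightarrow> real"
  assumes fin: "finite \<Omega>" and i: "i \<in> \<Omega>" and c: "\<And>j. j \<in> \<Omega> \<Longrightarrow> c j > 0"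
  shows "measure (exp_race_space \<Omega>) {e \<in> space (exp_race_space \<Omega>). 0 \<le> e i \<and> (\<forall>j\<in>\<Omega>-{i}. c j * e i < e j)}
     = 1 / (1 + (\<Sum>j\<in>\<Omega>-{i}. c j))"
proof -
  have "0 \<le> (\<Sum>j\<in>\<Omega>-{i}. c j)" using c by (auto intro!: sum_nonneg simp: less_imp_le)
  then show ?thesis
    using core_emeasure[OF assms] by (simp add: measure_def)
qed

lemma Sset_measure:
  assumes fin: "finite \<Omega>" and i: "i \<in> \<Omega>" and w: "\<And>j. j \<in> \<Omega> \<Longrightarrow> w j > 0"
    and s: "(\<Sum>j\<in>\<Omega>. w j) = 1"
  shows "measure (exp_race_space \<Omega>) (Sset \<Omega> w i) = w i"
proof -
  have "(\<Sum>j\<in>\<Omega>-{i}. w j / w i) = (\<Sum>j\<in>\<Omega>-{i}. w j) / w i"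
    by (simp add: sum_divide_distrib)
  also have "(\<Sum>j\<in>\<Omega>-{i}. w j) = 1 - w i"
    using s fin i by (simp add: sum_diff1)
  finally have "1 + (\<Sum>j\<in>\<Omega>-{i}. w j / w i) = 1 / w i"
    using w[OF i] by (simp add: field_simps)
  then show ?thesis
    using Sset_single[OF i, of w] w core_measure[OF fin i, of "\<lambda>j. w j / w i"] i
    by simp
qed

lemma Sset_sets:
  assumes fin: "finite \<Omega>" and i: "i \<in> \<Omega>"
  shows "Sset \<Omega> w i \<in> sets (exp_race_space \<Omega>)"
proof -
  have [measurable]: "Measurable.pred (exp_race_space \<Omega>) (\<lambda>e. e i / w i < e j / w j)" if "j \<in> \<Omega> - {i}" for j
  proof -
    have [measurable]: "(\<lambda>x. x j) \<in> borel_measurable (exp_race_space \<Omega>)"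
      "(\<lambda>x. x i) \<in> borel_measurable (exp_race_space \<Omega>)" using race_comp that i by auto
    show ?thesis by measurable
  qed
  have [measurable]: "(\<lambda>x. x i) \<in> borel_measurable (exp_race_space \<Omega>)" by (rule race_comp[OF i])
  have [measurable]: "Measurable.pred (exp_race_space \<Omega>) (\<lambda>e. \<forall>j\<in>\<Omega>-{i}. e i / w i < e j / w j)"
    using fin by (intro pred_intros_finite) auto
  show ?thesis unfolding Sset_def by measurable
qed

lemma Sset_argmin:
  assumes fin: "finite \<Omega>" and i: "i \<in> \<Omega>" and e: "e \<in> Sset \<Omega> w i"
  shows "arg_min_on (\<lambda>j. e j / w j) \<Omega> = i"
proof -
  have lt: "e i / w i < e j / w j" if "j \<in> \<Omega>" "j \<noteq> i" for j
    using e that unfolding Sset_def by auto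
  have "is_arg_min (\<lambda>j. e j / w j) (\<lambda>x. x \<in> \<Omega>) i"
    unfolding is_arg_min_def using i lt by (auto dest: less_asym)
  then show ?thesis
    unfolding arg_min_on_def arg_min_def
    by (rule someI2) (use lt in \<open>auto simp: is_arg_min_def\<close>)
qed

lemma Sset_disj:
  "disjoint_family_on (Sset \<Omega> w) \<Omega>"
  unfolding disjoint_family_on_def Sset_def by (auto dest: less_asym)


lemma argmin_some:
  fixes f :: "'b \<Rightarrow> 'c::linorder"
  shows   "arg_min_on f \<Omega> = (SOME x. x \<in> {x\<in>\<Omega>. \<forall>y\<in>\<Omega>. f x \<le> f y})"
  unfolding arg_min_on_def arg_min_def is_arg_min_def
  by (rule arg_cong[where f=Eps]) (auto simp: not_less)

lemma A_sets:
  assumes fin: "finite \<Omega>"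
  shows "{e \<in> space (exp_race_space \<Omega>).
        arg_min_on (\<lambda>i. e i / q i) \<Omega> = arg_min_on (\<lambda>i. e i / p i) \<Omega>} \<in> sets (exp_race_space \<Omega>)"
proof -
  let ?M = "exp_race_space \<Omega>"
  define mins where "mins w e = {x\<in>\<Omega>. \<forall>y\<in>\<Omega>. e x / w x \<le> e y / (w y :: real)}" for w e
  have am: "arg_min_on (\<lambda>i. e i / w i) \<Omega> = (SOME x. x \<in> mins w e)" for w e
    unfolding mins_def by (rule argmin_some)
  have Z: "{e\<in>space ?M. mins w e = K} \<in> sets ?M" if K: "K \<subseteq> \<Omega>" for w K
  proof -
    have [measurable]: "Measurable.pred ?M (\<lambda>e. e x / w x \<le> e y / w y)" if "x \<in> \<Omega>" "y \<in> \<Omega>" for x y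
    proof -
      have [measurable]: "(\<lambda>e. e x) \<in> borel_measurable (exp_race_space \<Omega>)"
        "(\<lambda>e. e y) \<in> borel_measurable (exp_race_space \<Omega>)"
        using race_comp[OF that(1)] race_comp[OF that(2)] by auto
      show ?thesis unfolding pred_def
        by (intro borel_measurable_le borel_measurable_divide) auto
    qed
    have "Measurable.pred ?M (\<lambda>e. (\<forall>x\<in>K. \<forall>y\<in>\<Omega>. e x / w x \<le> e y / w y) \<and> (\<forall>x\<in>\<Omega>-K. \<not> (\<forall>y\<in>\<Omega>. e x / w x \<le> e y / w y)))"
      using fin K by (intro pred_intros_finite pred_intros_logic) (auto intro: finite_subset)
    moreover have "{e\<in>space ?M. mins w e = K} = {e\<in>space ?M. (\<forall>x\<in>K. \<forall>y\<in>\<Omega>. e x / w x \<le> e y / w y) \<and> (\<forall>x\<in>\<Omega>-K. \<not> (\<forall>y\<in>\<Omega>. e x / w x \<le> e y / w y))}"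
      using K unfolding mins_def by blast
    ultimately show ?thesis by (simp add: pred_def)
  qed
  have eq: "{e \<in> space ?M. arg_min_on (\<lambda>i. e i / q i) \<Omega> = arg_min_on (\<lambda>i. e i / p i) \<Omega>}
     = (\<Union>K1\<in>Pow \<Omega>. \<Union>K2\<in>Pow \<Omega>. (if (SOME x. x \<in> K1) = (SOME x. x \<in> K2)
           then {e\<in>space ?M. mins q e = K1} \<inter> {e\<in>space ?M. mins p e = K2} else {}))"
  proof (intro equalityI subsetI)
    fix e assume e: "e \<in> {e \<in> space ?M. arg_min_on (\<lambda>i. e i / q i) \<Omega> = arg_min_on (\<lambda>i. e i / p i) \<Omega>}"
    have "mins q e \<in> Pow \<Omega>" "mins p e \<in> Pow \<Omega>" unfolding mins_def by auto
    then show "e \<in> (\<Union>K1\<in>Pow \<Omega>. \<Union>K2\<in>Pow \<Omega>. (if (SOME x. x \<in> K1) = (SOME x. x \<in> K2)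
           then {e\<in>space ?M. mins q e = K1} \<inter> {e\<in>space ?M. mins p e = K2} else {}))"
      using e by (auto simp: am)
  qed (auto simp: am split: if_splits)
  show ?thesis unfolding eq
    using fin Z by (intro sets.finite_UN) auto
qed


theorem lemma1:
  fixes \<Omega> :: "'a set" and p q :: "'a \<Rightarrow> real"
  assumes "finite \<Omega>" and "\<Omega> \<noteq> {}"
    and "\<And>i. i \<in> \<Omega> \<Longrightarrow> p i > 0" and "\<And>i. i \<in> \<Omega> \<Longrightarrow> q i > 0"
    and "(\<Sum>i\<in>\<Omega>. p i) = 1" and "(\<Sum>i\<in>\<Omega>. q i) = 1"
  shows "1 - D_TV \<Omega> p q \<ge> P_accept1 \<Omega> p q \<and> P_accept1 \<Omega> p q \<ge> D_HM \<Omega> p q"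
proof -
  note fin = assms(1) and pp = assms(3) and qp = assms(4) and ps = assms(5) and qs = assms(6)
  define M where "M = exp_race_space \<Omega>"
  interpret prob_space M unfolding M_def by (rule race_prob)
  define A where "A = {e \<in> space M. arg_min_on (\<lambda>i. e i / q i) \<Omega> = arg_min_on (\<lambda>i. e i / p i) \<Omega>}"
  have PA: "P_accept1 \<Omega> p q = measure M A" unfolding P_accept1_def A_def M_def ..
  have Asets: "A \<in> sets M" unfolding A_def M_def by (rule A_sets[OF fin])
  define B where "B i = Sset \<Omega> q i \<inter> Sset \<Omega> p i" for i
  have Ssets: "Sset \<Omega> w i \<in> sets M" if "i \<in> \<Omega>" for w i
    unfolding M_def by (rule Sset_sets[OF fin that])
  have Bsets: "B i \<in> sets M" if "i \<in> \<Omega>" for i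
    unfolding B_def using Ssets[OF that] by auto
  have BU: "(\<Union>i\<in>\<Omega>. B i) \<in> sets M" using sets.finite_UN[of \<Omega> B M] fin Bsets by auto
  have Bdisj: "disjoint_family_on B \<Omega>"
    using Sset_disj[of \<Omega> q] unfolding disjoint_family_on_def B_def by blast
  have munion: "measure M (\<Union>i\<in>\<Omega>. B i) = (\<Sum>i\<in>\<Omega>. measure M (B i))"
    by (rule finite_measure_finite_Union) (use fin Bsets Bdisj in auto)
  have Bsub: "B i \<subseteq> A" if "i \<in> \<Omega>" for i
  proof
    fix e assume e: "e \<in> B i"
    have "arg_min_on (\<lambda>j. e j / q j) \<Omega> = i" "arg_min_on (\<lambda>j. e j / p j) \<Omega> = i"
      using e Sset_argmin[OF fin that] unfolding B_def by auto
    moreover have "e \<in> space M" using e unfolding B_def Sset_def M_def by auto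
    ultimately show "e \<in> A" unfolding A_def by auto
  qed
  have Blow: "measure M (B i) \<ge> p i * q i / (p i + q i)" if i: "i \<in> \<Omega>" for i
  proof -
    define C where "C = (\<Sum>j\<in>\<Omega>-{i}. max (q j / q i) (p j / p i))"
    have cpos: "max (q j / q i) (p j / p i) > 0" if "j \<in> \<Omega>" for j
      using pp[OF that] qp[OF that] pp[OF i] qp[OF i] by (simp add: less_max_iff_disj)
    have Beq: "B i = {e \<in> space (exp_race_space \<Omega>). 0 \<le> e i \<and> (\<forall>j\<in>\<Omega>-{i}. max (q j / q i) (p j / p i) * e i < e j)}"
      unfolding B_def by (rule Sset_inter[OF i pp qp])
    have mB: "measure M (B i) = 1 / (1 + C)"
      unfolding Beq M_def C_def by (rule core_measure[OF fin i cpos])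
    have "C \<le> (\<Sum>j\<in>\<Omega>-{i}. q j / q i + p j / p i)"
      unfolding C_def using pp qp i
      by (intro sum_mono) (auto intro!: max.boundedI simp: less_imp_le)
    also have "\<dots> = (\<Sum>j\<in>\<Omega>-{i}. q j) / q i + (\<Sum>j\<in>\<Omega>-{i}. p j) / p i"
      by (simp add: sum.distrib sum_divide_distrib)
    also have "(\<Sum>j\<in>\<Omega>-{i}. q j) = 1 - q i" using qs fin i by (simp add: sum_diff1)
    also have "(\<Sum>j\<in>\<Omega>-{i}. p j) = 1 - p i" using ps fin i by (simp add: sum_diff1)
    finally have "C \<le> (1 - q i) / q i + (1 - p i) / p i" .
    also have "\<dots> = 1 / q i + 1 / p i - 2" using pp[OF i] qp[OF i] by (simp add: diff_divide_distrib)
    finally have C: "1 + C \<le> (p i + q i) / (p i * q i)"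
      using pp[OF i] qp[OF i] by (simp add: add_divide_distrib)
    have C0: "0 < 1 + C" unfolding C_def using cpos
      by (intro add_pos_nonneg sum_nonneg) (auto simp: less_imp_le)
    have "p i * q i / (p i + q i) = 1 / ((p i + q i) / (p i * q i))" by simp
    also have "\<dots> \<le> 1 / (1 + C)"
      by (rule divide_left_mono[OF C]) (use C0 pp[OF i] qp[OF i] in auto)
    finally show ?thesis using mB by simp
  qed
  have lower: "D_HM \<Omega> p q \<le> measure M A"
  proof -
    have "D_HM \<Omega> p q \<le> (\<Sum>i\<in>\<Omega>. measure M (B i))"
      unfolding D_HM_def by (rule sum_mono) (rule Blow)
    also have "\<dots> = measure M (\<Union>i\<in>\<Omega>. B i)" by (rule munion[symmetric])
    also have "\<dots> \<le> measure M A" by (rule finite_measure_mono) (use Bsub Asets in auto)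
    finally show ?thesis .
  qed
  define N where "N w = space M - (\<Union>i\<in>\<Omega>. Sset \<Omega> w i)" for w
  have Nsets: "N w \<in> sets M" for w unfolding N_def using fin Ssets by auto
  have N0: "measure M (N w) = 0" if wp: "\<And>j. j \<in> \<Omega> \<Longrightarrow> w j > 0" and ws: "(\<Sum>j\<in>\<Omega>. w j) = 1" for w
  proof -
    have "measure M (\<Union>i\<in>\<Omega>. Sset \<Omega> w i) = (\<Sum>i\<in>\<Omega>. measure M (Sset \<Omega> w i))"
      by (rule finite_measure_finite_Union) (use fin Ssets Sset_disj in auto)
    also have "\<dots> = (\<Sum>i\<in>\<Omega>. w i)" unfolding M_def
      by (rule sum.cong[OF refl], rule Sset_measure[OF fin _ wp ws])
    finally have "measure M (\<Union>i\<in>\<Omega>. Sset \<Omega> w i) = 1" using ws by simp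
    then show ?thesis unfolding N_def
      using finite_measure_compl[of "\<Union>i\<in>\<Omega>. Sset \<Omega> w i"] fin Ssets prob_space
        sets.finite_UN[of \<Omega> "Sset \<Omega> w" M] by auto
  qed
  have Acov: "A \<subseteq> (\<Union>i\<in>\<Omega>. B i) \<union> N q \<union> N p"
  proof
    fix e assume e: "e \<in> A"
    show "e \<in> (\<Union>i\<in>\<Omega>. B i) \<union> N q \<union> N p"
    proof (cases "e \<in> N q \<or> e \<in> N p")
      case False
      then obtain i k where i: "i \<in> \<Omega>" "e \<in> Sset \<Omega> q i" and k: "k \<in> \<Omega>" "e \<in> Sset \<Omega> p k"
        using e unfolding N_def A_def by auto
      have "i = k" using Sset_argmin[OF fin i] Sset_argmin[OF fin k] e unfolding A_def by auto
      then show ?thesis using i k unfolding B_def by auto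
    qed auto
  qed
  have upper: "measure M A \<le> 1 - D_TV \<Omega> p q"
  proof -
    have "measure M A \<le> measure M ((\<Union>i\<in>\<Omega>. B i) \<union> N q \<union> N p)"
      by (rule finite_measure_mono[OF Acov]) (use BU Nsets in auto)
    also have "\<dots> \<le> measure M ((\<Union>i\<in>\<Omega>. B i) \<union> N q) + measure M (N p)"
      by (rule measure_subadditive) (use BU Nsets in auto)
    also have "\<dots> \<le> measure M (\<Union>i\<in>\<Omega>. B i) + measure M (N q) + measure M (N p)"
      using measure_subadditive[of "\<Union>i\<in>\<Omega>. B i" M "N q"] BU Nsets by auto
    also have "\<dots> = (\<Sum>i\<in>\<Omega>. measure M (B i))"
      using N0[OF pp ps] N0[OF qp qs] munion by simp
    also have "\<dots> \<le> (\<Sum>i\<in>\<Omega>. min (p i) (q i))"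
    proof (rule sum_mono)
      fix i assume i: "i \<in> \<Omega>"
      have "measure M (B i) \<le> measure M (Sset \<Omega> p i)"
        by (rule finite_measure_mono) (use Ssets i in \<open>auto simp: B_def\<close>)
      also have "\<dots> = p i" unfolding M_def by (rule Sset_measure[OF fin i pp ps])
      finally have 1: "measure M (B i) \<le> p i" .
      have "measure M (B i) \<le> measure M (Sset \<Omega> q i)"
        by (rule finite_measure_mono) (use Ssets i in \<open>auto simp: B_def\<close>)
      also have "\<dots> = q i" unfolding M_def by (rule Sset_measure[OF fin i qp qs])
      finally have 2: "measure M (B i) \<le> q i" .
      show "measure M (B i) \<le> min (p i) (q i)" using 1 2 by simp
    qed
    also have "\<dots> = (\<Sum>i\<in>\<Omega>. (p i + q i - \<bar>p i - q i\<bar>) / 2)"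
      by (rule sum.cong) (auto simp: min_def abs_if)
    also have "\<dots> = 1 - D_TV \<Omega> p q"
      unfolding D_TV_def using ps qs
      by (simp add: sum_divide_distrib[symmetric] sum_subtractf sum.distrib)
    finally show ?thesis .
  qed
  show ?thesis using lower upper PA by simp
qed

end
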